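(* There is an absolute constant $C>0$ such that the following holds. Let $\epsilon\in(0,1)$, let $u\in\mathbb{R}^d$, and let $S\subseteq\mathbb{R}^d$ be a finite set of vectors of Euclidean norm at most $1$ with pairwise distinct values $u^Tx$, of intrinsic dimension $d'$. Let $t=\lceil C d'\log(d'/\epsilon)\rceil$ and suppose $|S|\ge 4t$. Then $$|\{x\in S:\ S\setminus\{x\}\vdash x\}|\ge \tfrac34|S|.$$
   Context: For a finite set $T=\{x_1,\dots,x_s\}$ sorted so that $u^Tx_1>\dots>u^Tx_s$, write $T\vdash x$ if $\min_{\alpha_1,\dots,\alpha_{s-1}\ge 0}\big\|x-x_1-\sum_{j=1}^{s-1}\alpha_j(x_{j+1}-x_j)\big\|_2\le\epsilon$. The intrinsic dimension of a set is the smallest number of orthonormal vectors whose span contains the set. *)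

theory Defs
  imports Complex_Main
begin

text \<open>Vectors of R^d are represented as functions nat => real whose coordinates
  outside {..<d} vanish; this lets the dimension d be quantified inside the
  statement (the constant C must not depend on d).\<close>

definition in_Rd :: "nat \<Rightarrow> (nat \<Rightarrow> real) \<Rightarrow> bool" where
  "in_Rd d x \<longleftrightarrow> (\<forall>i\<ge>d. x i = 0)"

definition ip :: "nat \<Rightarrow> (nat \<Rightarrow> real) \<Rightarrow> (nat \<Rightarrow> real) \<Rightarrow> real" where
  "ip d x y = (\<Sum>i<d. x i * y i)"

definition vnorm :: "nat \<Rightarrow> (nat \<Rightarrow> real) \<Rightarrow> real" where
  "vnorm d x = sqrt (ip d x x)"

definition intrinsic_dim :: "nat \<Rightarrow> (nat \<Rightarrow> real) set \<Rightarrow> nat" where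
  "intrinsic_dim d S = (LEAST k. \<exists>b :: nat \<Rightarrow> nat \<Rightarrow> real.
      (\<forall>j<k. in_Rd d (b j)) \<and>
      (\<forall>j<k. \<forall>l<k. ip d (b j) (b l) = (if j = l then 1 else 0)) \<and>
      (\<forall>x\<in>S. \<exists>c :: nat \<Rightarrow> real. \<forall>i. x i = (\<Sum>j<k. c j * b j i)))"

definition sorted_desc :: "nat \<Rightarrow> (nat \<Rightarrow> real) \<Rightarrow> (nat \<Rightarrow> real) set \<Rightarrow> (nat \<Rightarrow> real) list" where
  "sorted_desc d u T = (THE xs. set xs = T \<and> sorted_wrt (\<lambda>a b. ip d u b < ip d u a) xs)"

definition derives :: "nat \<Rightarrow> (nat \<Rightarrow> real) \<Rightarrow> real \<Rightarrow> (nat \<Rightarrow> real) set \<Rightarrow> (nat \<Rightarrow> real) \<Rightarrow> bool" where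
  "derives d u \<epsilon> T x \<longleftrightarrow>
     (let xs = sorted_desc d u T; s = length xs in
      Inf {vnorm d (\<lambda>i. x i - (xs ! 0) i - (\<Sum>j<s - 1. \<alpha> j * ((xs ! (j+1)) i - (xs ! j) i)))
           | \<alpha> :: nat \<Rightarrow> real. \<forall>j<s - 1. 0 \<le> \<alpha> j} \<le> \<epsilon>)"

end

theory Submission
  imports Defs
begin

definition qf :: "nat \<Rightarrow> (nat \<Rightarrow> nat \<Rightarrow> real) \<Rightarrow> (nat \<Rightarrow> real) \<Rightarrow> real" where
  "qf N Q x = (\<Sum>a<N. \<Sum>b<N. x a * Q a b * x b)"

definition schur :: "nat \<Rightarrow> (nat \<Rightarrow> nat \<Rightarrow> real) \<Rightarrow> nat \<Rightarrow> nat \<Rightarrow> real" where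
  "schur e Q i j = Q i j - Q i e * Q e j / Q e e"

fun D :: "nat \<Rightarrow> (nat \<Rightarrow> nat \<Rightarrow> real) \<Rightarrow> real" where
  "D 0 Q = 1"
| "D (Suc N) Q = Q N N * D N (schur N Q)"

definition PD :: "nat \<Rightarrow> (nat \<Rightarrow> nat \<Rightarrow> real) \<Rightarrow> bool" where
  "PD N Q \<longleftrightarrow> (\<forall>i<N. \<forall>j<N. Q i j = Q j i) \<and> (\<forall>x. (\<exists>i<N. x i \<noteq> 0) \<longrightarrow> qf N Q x > 0)"

lemma D_cong: "(\<And>i j. i < N \<Longrightarrow> j < N \<Longrightarrow> Q i j = Q' i j) \<Longrightarrow> D N Q = D N Q'"
proof (induction N arbitrary: Q Q')
  case 0 then show ?case by simp
next
  case (Suc N)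
  have "D N (schur N Q) = D N (schur N Q')"
    by (rule Suc.IH) (simp add: schur_def Suc.prems)
  then show ?case by (simp add: Suc.prems)
qed

lemma qf_cong: "(\<And>i j. i < N \<Longrightarrow> j < N \<Longrightarrow> Q i j = Q' i j) \<Longrightarrow> (\<And>i. i < N \<Longrightarrow> x i = x' i) \<Longrightarrow> qf N Q x = qf N Q' x'"
  unfolding qf_def by (intro sum.cong refl) auto

lemma qf_Suc:
  assumes sym: "\<And>i. i < N \<Longrightarrow> Q i N = Q N i" and p: "Q N N \<noteq> 0"
  shows "qf (Suc N) Q x = qf N (schur N Q) x + Q N N * (x N + (\<Sum>i<N. Q N i * x i) / Q N N)^2"
proof -
  define s where "s = (\<Sum>i<N. Q N i * x i)"
  define p where "p = Q N N"
  have "qf (Suc N) Q x = (\<Sum>a<N. \<Sum>b<N. x a * Q a b * x b) + (\<Sum>a<N. x a * Q a N * x N)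
      + (\<Sum>b<N. x N * Q N b * x b) + x N * Q N N * x N"
    unfolding qf_def by (simp add: sum.distrib algebra_simps)
  also have "(\<Sum>a<N. x a * Q a N * x N) = x N * s"
    unfolding s_def by (simp add: sum_distrib_left sym algebra_simps)
  also have "(\<Sum>b<N. x N * Q N b * x b) = x N * s"
    unfolding s_def by (simp add: sum_distrib_left algebra_simps)
  also have "(\<Sum>a<N. \<Sum>b<N. x a * Q a b * x b) = qf N (schur N Q) x + s^2 / p"
  proof -
    have "qf N (schur N Q) x = (\<Sum>a<N. \<Sum>b<N. x a * Q a b * x b) - (\<Sum>a<N. \<Sum>b<N. (x a * Q a N) * (Q N b * x b) / p)"
      unfolding qf_def schur_def p_def by (simp add: sum_subtractf algebra_simps)
    also have "(\<Sum>a<N. \<Sum>b<N. (x a * Q a N) * (Q N b * x b) / p) = s^2 / p"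
      unfolding s_def power2_eq_square
      by (simp add: sum_divide_distrib[symmetric] sum_product sym algebra_simps)
    finally show ?thesis by simp
  qed
  finally show ?thesis
    using p unfolding s_def[symmetric] p_def[symmetric]
    by (simp add: field_simps power2_eq_square)
qed

lemma qf_unit: "i < N \<Longrightarrow> qf N Q (\<lambda>j. if j = i then 1 else 0) = Q i i"
proof -
  assume i: "i < N"
  have e: "\<And>a b. (if a = i then 1 else 0) * Q a b * (if b = i then 1 else 0) = (if b = i then (if a = i then Q a b else 0) else (0::real))"
    by simp
  show ?thesis unfolding qf_def e using i by simp
qed

lemma PD_pos: "PD N Q \<Longrightarrow> i < N \<Longrightarrow> x i \<noteq> 0 \<Longrightarrow> qf N Q x > 0"
proof -
  assume pd: "PD N Q" and i: "i < N" "x i \<noteq> 0"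
  have h: "\<forall>x. (\<exists>i<N. x i \<noteq> 0) \<longrightarrow> qf N Q x > 0" using pd unfolding PD_def by (rule conjunct2)
  have "\<exists>i<N. x i \<noteq> 0" using i by blast
  then show ?thesis using h by simp
qed

lemma PD_diag: "PD N Q \<Longrightarrow> i < N \<Longrightarrow> Q i i > 0"
proof -
  assume pd: "PD N Q" and i: "i < N"
  have "qf N Q (\<lambda>j. if j = i then 1 else 0) > 0"
    by (rule PD_pos[OF pd i]) simp
  then show ?thesis using qf_unit[OF i] by simp
qed

lemma PD_sym: "PD N Q \<Longrightarrow> i < N \<Longrightarrow> j < N \<Longrightarrow> Q i j = Q j i"
  unfolding PD_def by blast

lemma PD_schur:
  assumes "PD (Suc N) Q"
  shows "PD N (schur N Q)"
proof -
  have p: "Q N N > 0" using PD_diag[OF assms] by simp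
  have sym: "\<And>i. i < N \<Longrightarrow> Q i N = Q N i"
  proof -
    fix i assume "i < N" then show "Q i N = Q N i" using PD_sym[OF assms, of i N] by simp
  qed
  have "\<forall>i<N. \<forall>j<N. schur N Q i j = schur N Q j i"
  proof (intro allI impI)
    fix i j assume ij: "i < N" "j < N"
    have e: "Q i j = Q j i" using PD_sym[OF assms, of i j] ij by simp
    show "schur N Q i j = schur N Q j i"
      unfolding schur_def e sym[OF ij(1)] sym[OF ij(2)] by (simp add: mult.commute)
  qed
  moreover have "qf N (schur N Q) x > 0" if nz: "\<exists>i<N. x i \<noteq> 0" for x
  proof -
    define x' where "x' = x(N := - (\<Sum>i<N. Q N i * x i) / Q N N)"
    have "qf (Suc N) Q x' > 0"
    proof -
      obtain i where "i < N" "x i \<noteq> 0" using nz by blast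
      then have "i < Suc N" "x' i \<noteq> 0" unfolding x'_def by auto
      then show ?thesis using PD_pos[OF assms] by blast
    qed
    moreover have "qf (Suc N) Q x' = qf N (schur N Q) x'"
    proof -
      have "(\<Sum>i<N. Q N i * x' i) = (\<Sum>i<N. Q N i * x i)"
        unfolding x'_def by (intro sum.cong) auto
      then have "x' N + (\<Sum>i<N. Q N i * x' i) / Q N N = 0"
        unfolding x'_def using p by simp
      then show ?thesis using qf_Suc[of N Q x', OF sym] p by simp
    qed
    moreover have "qf N (schur N Q) x' = qf N (schur N Q) x"
      by (rule qf_cong) (auto simp: x'_def)
    ultimately show ?thesis by simp
  qed
  ultimately show ?thesis unfolding PD_def by (intro conjI) auto
qed


lemma hadamard: "PD N Q \<Longrightarrow> 0 < D N Q \<and> D N Q \<le> (\<Prod>i<N. Q i i)"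
proof (induction N arbitrary: Q)
  case 0 then show ?case by simp
next
  case (Suc N)
  have p: "Q N N > 0" using PD_diag[OF Suc.prems] by simp
  have pd: "PD N (schur N Q)" using PD_schur[OF Suc.prems] .
  from Suc.IH[OF pd] have ih: "0 < D N (schur N Q)" "D N (schur N Q) \<le> (\<Prod>i<N. schur N Q i i)" by auto
  have "(\<Prod>i<N. schur N Q i i) \<le> (\<Prod>i<N. Q i i)"
  proof (rule prod_mono)
    fix i assume "i \<in> {..<N}"
    then have i: "i < N" by simp
    have s: "Q i N = Q N i" using PD_sym[OF Suc.prems, of i N] i by simp
    have "schur N Q i i > 0" using PD_diag[OF pd i] .
    moreover have "Q i N * Q N i / Q N N \<ge> 0" using p unfolding s by simp
    ultimately show "0 \<le> schur N Q i i \<and> schur N Q i i \<le> Q i i" unfolding schur_def by simp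
  qed
  with ih have "D N (schur N Q) \<le> (\<Prod>i<N. Q i i)" by simp
  with ih p show ?case by (simp add: mult_left_mono)
qed

lemma schur_rank1_identity:
  fixes q a b x y z p :: real
  assumes p: "p > 0"
  shows "q + x * y - (a + x * z) * (b + z * y) / (p + z * z)
       = (q - a * b / p) + (p / (p + z^2)) * (x - z * a / p) * (y - z * b / p)"
proof -
  define D where "D = p + z * z"
  have D: "D > 0" unfolding D_def using p by (simp add: add_pos_nonneg)
  have pz2: "p + z^2 = D" unfolding D_def by (simp add: power2_eq_square)
  have "q + x * y - (a + x * z) * (b + z * y) / D - ((q - a * b / p) + (p / D) * (x - z * a / p) * (y - z * b / p))
     = (x * y * p * D + a * b * D - p * (a + x * z) * (b + z * y) - (p * x - z * a) * (p * y - z * b)) / (p * D)"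
    using p D by (simp add: field_simps)
  also have "x * y * p * D + a * b * D - p * (a + x * z) * (b + z * y) - (p * x - z * a) * (p * y - z * b) = 0"
    unfolding D_def by (simp add: algebra_simps)
  finally show ?thesis unfolding pz2 D_def[symmetric] by simp
qed

lemma rank1:
  "PD N Q \<Longrightarrow> D N (\<lambda>i j. Q i j + v i * v j) * qf N Q x \<ge> D N Q * (qf N Q x + (\<Sum>i<N. x i * v i)^2)"
proof (induction N arbitrary: Q v x)
  case 0 then show ?case by (simp add: qf_def)
next
  case (Suc N)
  note pdS = Suc.prems
  define p where "p = Q N N"
  have p: "p > 0" using PD_diag[OF pdS] unfolding p_def by simp
  have sym: "\<And>i. i < N \<Longrightarrow> Q i N = Q N i"
  proof -
    fix i assume "i < N" then show "Q i N = Q N i" using PD_sym[OF pdS, of i N] by simp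
  qed
  define Q' where "Q' = schur N Q"
  have pd: "PD N Q'" unfolding Q'_def using PD_schur[OF pdS] .
  define z where "z = v N"
  define pt where "pt = p + z^2"
  have pt: "pt > 0" unfolding pt_def using p by (simp add: add_pos_nonneg)
  define c where "c = p / pt"
  have c: "c \<ge> 0" unfolding c_def using p pt by simp
  define w where "w i = sqrt c * (v i - z * Q i N / p)" for i
  define Qt where "Qt = (\<lambda>i j. Q i j + v i * v j)"
  have sch: "schur N Qt i j = Q' i j + w i * w j" if ij: "i < N" "j < N" for i j
  proof -
    have sc: "sqrt c * sqrt c = c" using c by simp
    have "w i * w j = (sqrt c * sqrt c) * ((v i - z * Q i N / p) * (v j - z * Q j N / p))"
      unfolding w_def by (simp only: mult_ac)
    then have "w i * w j = c * (v i - z * Q i N / p) * (v j - z * Q N j / p)"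
      unfolding sc sym[OF ij(2)] by simp
    note wp = this
    have "schur N Qt i j = Q i j + v i * v j - (Q i N + v i * z) * (Q N j + z * v j) / (p + z * z)"
      unfolding schur_def Qt_def z_def p_def by (simp add: ac_simps)
    also have "\<dots> = (Q i j - Q i N * Q N j / p) + (p / (p + z^2)) * (v i - z * Q i N / p) * (v j - z * Q N j / p)"
      by (rule schur_rank1_identity[OF p])
    also have "\<dots> = Q' i j + w i * w j"
      unfolding wp Q'_def schur_def c_def pt_def p_def by simp
    finally show ?thesis .
  qed
  define D1 where "D1 = D N (\<lambda>i j. Q' i j + w i * w j)"
  define D0 where "D0 = D N Q'"
  have Dt: "D (Suc N) Qt = pt * D1"
  proof -
    have "D N (schur N Qt) = D1" unfolding D1_def by (rule D_cong) (simp add: sch)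
    then show ?thesis unfolding Qt_def pt_def z_def p_def by (simp add: power2_eq_square)
  qed
  have Dq: "D (Suc N) Q = p * D0" unfolding D0_def Q'_def p_def by simp
  have D0: "D0 > 0" unfolding D0_def using hadamard[OF pd] by simp
  have IH: "D1 * qf N Q' y \<ge> D0 * (qf N Q' y + (\<Sum>i<N. y i * w i)^2)" for y
    unfolding D1_def D0_def using Suc.IH[OF pd] .
  have mono: "D1 \<ge> D0"
  proof (cases "N = 0")
    case True then show ?thesis unfolding D1_def D0_def by simp
  next
    case False
    then have N0: "0 < N" by simp
    define e where "e = (\<lambda>j::nat. if j = 0 then 1 else (0::real))"
    have X: "qf N Q' e > 0" unfolding e_def using PD_pos[OF pd N0] by simp
    have "D1 * qf N Q' e \<ge> D0 * qf N Q' e"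
      using IH[of e] D0 by (smt (verit) mult_nonneg_nonneg zero_le_power2 distrib_left)
    then show ?thesis using X by simp
  qed
  define X where "X = qf N Q' x"
  define s where "s = (\<Sum>i<N. Q N i * x i)"
  define y where "y = x N + s / p"
  have qfS: "qf (Suc N) Q x = X + p * y^2"
    unfolding X_def y_def s_def Q'_def p_def using qf_Suc[of N Q x, OF sym] p unfolding p_def by simp
  define A0 where "A0 = (\<Sum>i<N. x i * (v i - z * Q i N / p))"
  have A0: "A0 = (\<Sum>i<N. x i * v i) - z * s / p"
  proof -
    have "A0 = (\<Sum>i<N. x i * v i - (z / p) * (Q N i * x i))"
      unfolding A0_def by (intro sum.cong refl) (simp add: sym algebra_simps)
    also have "\<dots> = (\<Sum>i<N. x i * v i) - (z / p) * s"
      unfolding s_def by (simp add: sum_subtractf sum_distrib_left)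
    finally show ?thesis by simp
  qed
  have sumS: "(\<Sum>i<Suc N. x i * v i) = A0 + z * y"
    unfolding A0 y_def z_def using p by (simp add: field_simps)
  have sumw: "(\<Sum>i<N. x i * w i)^2 = c * A0^2"
  proof -
    have "(\<Sum>i<N. x i * w i) = sqrt c * A0"
      unfolding A0_def w_def by (simp add: sum_distrib_left algebra_simps)
    then show ?thesis using c by (simp add: power_mult_distrib)
  qed
  have goal: "pt * D1 * (X + p * y^2) \<ge> p * D0 * (X + p * y^2 + (A0 + z * y)^2)"
  proof (cases "X = 0")
    case True
    have "x i = 0" if "i < N" for i
    proof (rule ccontr)
      assume "x i \<noteq> 0"
      then have "qf N Q' x > 0" using PD_pos[OF pd that] by simp
      then show False using True unfolding X_def by simp
    qed
    then have "A0 = 0" unfolding A0_def by simp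
    then have r: "p * D0 * (X + p * y^2 + (A0 + z * y)^2) = pt * D0 * (p * y^2)"
      using True unfolding pt_def by (simp add: algebra_simps power_mult_distrib)
    have "pt * D0 * (p * y^2) \<le> pt * D1 * (p * y^2)"
      using mono pt p by (intro mult_right_mono mult_left_mono) auto
    moreover have "pt * D1 * (X + p * y^2) = pt * D1 * (p * y^2)" using True by simp
    ultimately show ?thesis using r by linarith
  next
    case False
    have X0: "X \<ge> 0"
    proof (cases "\<exists>i<N. x i \<noteq> 0")
      case True then show ?thesis using PD_pos[OF pd] unfolding X_def by (auto intro: less_imp_le)
    next
      case False
      then show ?thesis unfolding X_def qf_def by simp
    qed
    with False have Xp: "X > 0" by simp
    have ih: "D1 * X \<ge> D0 * (X + c * A0^2)" using IH[of x] sumw unfolding X_def by simp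
    have cs: "X * p * (A0 + z * y)^2 \<le> (X + p * y^2) * (p * A0^2 + X * z^2)"
    proof -
      have "(X + p * y^2) * (p * A0^2 + X * z^2) - X * p * (A0 + z * y)^2 = (p * y * A0 - X * z)^2"
        by (simp add: algebra_simps power2_eq_square)
      then show ?thesis by (smt (verit) zero_le_power2)
    qed
    have ptc: "pt * c = p" unfolding c_def using pt by simp
    have Y: "X + p * y^2 \<ge> 0" using X0 p by simp
    have "X * (p * D0 * (X + p * y^2 + (A0 + z * y)^2)) = D0 * (p * X * (X + p * y^2) + X * p * (A0 + z * y)^2)"
      by (simp add: algebra_simps)
    also have "\<dots> \<le> D0 * (p * X * (X + p * y^2) + (X + p * y^2) * (p * A0^2 + X * z^2))"
      using cs D0 by (intro mult_left_mono) auto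
    also have "\<dots> = (X + p * y^2) * (D0 * (pt * X + p * A0^2))"
      unfolding pt_def by (simp add: algebra_simps)
    also have "D0 * (pt * X + p * A0^2) = pt * (D0 * (X + c * A0^2))"
      using ptc by (simp add: algebra_simps)
    also have "(X + p * y^2) * (pt * (D0 * (X + c * A0^2))) \<le> (X + p * y^2) * (pt * (D1 * X))"
      using ih pt Y by (intro mult_left_mono) auto
    also have "\<dots> = X * (pt * D1 * (X + p * y^2))" by (simp add: algebra_simps)
    finally show ?thesis using Xp by simp
  qed
  show ?case
    using goal unfolding Qt_def[symmetric] Dt Dq qfS sumS by simp
qed

lemma rank1_mono: "PD N Q \<Longrightarrow> D N Q \<le> D N (\<lambda>i j. Q i j + v i * v j)"
proof (cases "N = 0")
  case True then show ?thesis by simp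
next
  case False
  assume pd: "PD N Q"
  then have N0: "0 < N" using False by simp
  define e where "e = (\<lambda>j::nat. if j = 0 then 1 else (0::real))"
  have X: "qf N Q e > 0" unfolding e_def using PD_pos[OF pd N0] by simp
  have D0: "D N Q > 0" using hadamard[OF pd] by simp
  have "D N (\<lambda>i j. Q i j + v i * v j) * qf N Q e \<ge> D N Q * (qf N Q e + (\<Sum>i<N. e i * v i)^2)"
    using rank1[OF pd] .
  moreover have "D N Q * (qf N Q e + (\<Sum>i<N. e i * v i)^2) \<ge> D N Q * qf N Q e"
    using D0 by (intro mult_left_mono) auto
  ultimately show ?thesis using X by (smt (verit) mult_le_cancel_right)
qed

definition Wm :: "real \<Rightarrow> (nat \<Rightarrow> nat \<Rightarrow> real) \<Rightarrow> nat \<Rightarrow> nat \<Rightarrow> nat \<Rightarrow> real" where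
  "Wm lam v i = (\<lambda>a b. lam * (if a = b then 1 else 0) + (\<Sum>j<i. v j a * v j b))"

lemma Wm_Suc: "Wm lam v (Suc i) = (\<lambda>a b. Wm lam v i a b + v i a * v i b)"
  unfolding Wm_def by (simp add: algebra_simps)

lemma qf_Wm: "qf N (Wm lam v i) x = lam * (\<Sum>a<N. (x a)^2) + (\<Sum>j<i. (\<Sum>a<N. x a * v j a)^2)"
proof -
  have "qf N (Wm lam v i) x = (\<Sum>a<N. \<Sum>b<N. lam * (x a * (if a = b then 1 else 0) * x b))
      + (\<Sum>a<N. \<Sum>b<N. \<Sum>j<i. (x a * v j a) * (x b * v j b))"
    unfolding qf_def Wm_def by (simp add: sum.distrib algebra_simps sum_distrib_left)
  also have "(\<Sum>a<N. \<Sum>b<N. lam * (x a * (if a = b then 1 else 0) * x b)) = lam * (\<Sum>a<N. (x a)^2)"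
  proof -
    have e: "\<And>a b. lam * (x a * (if a = b then 1 else 0) * x b) = (if a = b then lam * (x a)^2 else 0)"
      by (simp add: power2_eq_square)
    show ?thesis unfolding e by (simp add: sum_distrib_left)
  qed
  also have "(\<Sum>a<N. \<Sum>b<N. \<Sum>j<i. (x a * v j a) * (x b * v j b)) = (\<Sum>j<i. (\<Sum>a<N. x a * v j a)^2)"
    by (simp add: power2_eq_square sum_product sum.swap[of _ "{..<i}"] )
  finally show ?thesis .
qed

lemma PD_Wm: "lam > 0 \<Longrightarrow> PD N (Wm lam v i)"
proof -
  assume lam: "lam > 0"
  have "qf N (Wm lam v i) x > 0" if nz: "\<exists>a<N. x a \<noteq> 0" for x
  proof -
    obtain a where a: "a < N" "x a \<noteq> 0" using nz by blast
    have "(\<Sum>a<N. (x a)^2) \<ge> (x a)^2"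
      using a by (intro member_le_sum) auto
    moreover have "(x a)^2 > 0" using a by simp
    ultimately have "(\<Sum>a<N. (x a)^2) > 0" by linarith
    then have "lam * (\<Sum>a<N. (x a)^2) > 0" using lam by simp
    moreover have "(\<Sum>j<i. (\<Sum>a<N. x a * v j a)^2) \<ge> 0" by (intro sum_nonneg) auto
    ultimately show ?thesis unfolding qf_Wm by simp
  qed
  moreover have "\<forall>a<N. \<forall>b<N. Wm lam v i a b = Wm lam v i b a"
    unfolding Wm_def by (simp add: mult.commute)
  ultimately show ?thesis unfolding PD_def by blast
qed

lemma D_diag: "D N (\<lambda>a b. lam * (if a = b then 1 else 0)) = lam ^ N"
proof (induction N)
  case 0 then show ?case by simp
next
  case (Suc N)
  have "D N (schur N (\<lambda>a b. lam * (if a = b then 1 else 0))) = D N (\<lambda>a b. lam * (if a = b then 1 else 0))"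
    by (rule D_cong) (auto simp: schur_def)
  then show ?case using Suc.IH by simp
qed

lemma Wm_0: "Wm lam v 0 = (\<lambda>a b. lam * (if a = b then 1 else 0))"
  unfolding Wm_def by simp

lemma potential_lower:
  assumes lam: "lam > 0"
  shows "lam ^ N * (3/2) ^ card {i. i < M \<and> (\<exists>x. 0 < (\<Sum>a<N. x a * v i a)^2 \<and> qf N (Wm lam v i) x \<le> 2 * (\<Sum>a<N. x a * v i a)^2)}
         \<le> D N (Wm lam v M)"
proof (induction M)
  case 0 then show ?case by (simp add: Wm_0 D_diag)
next
  case (Suc M)
  define G where "G i \<longleftrightarrow> (\<exists>x. 0 < (\<Sum>a<N. x a * v i a)^2 \<and> qf N (Wm lam v i) x \<le> 2 * (\<Sum>a<N. x a * v i a)^2)" for i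
  have pd: "PD N (Wm lam v M)" using PD_Wm[OF lam] .
  have D0: "D N (Wm lam v M) > 0" using hadamard[OF pd] by simp
  have mono: "D N (Wm lam v M) \<le> D N (Wm lam v (Suc M))"
    unfolding Wm_Suc using rank1_mono[OF pd] .
  have big: "(3/2) * D N (Wm lam v M) \<le> D N (Wm lam v (Suc M))" if g: "G M"
  proof -
    obtain x where x: "0 < (\<Sum>a<N. x a * v M a)^2" "qf N (Wm lam v M) x \<le> 2 * (\<Sum>a<N. x a * v M a)^2"
      using g unfolding G_def by blast
    define s where "s = (\<Sum>a<N. x a * v M a)^2"
    have "\<exists>a<N. x a \<noteq> 0"
    proof (rule ccontr)
      assume "\<not> (\<exists>a<N. x a \<noteq> 0)"
      then have "(\<Sum>a<N. x a * v M a) = 0" by simp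
      then show False using x by simp
    qed
    then obtain a where "a < N" "x a \<noteq> 0" by blast
    then have q: "qf N (Wm lam v M) x > 0" using PD_pos[OF pd] by blast
    have r: "D N (Wm lam v (Suc M)) * qf N (Wm lam v M) x \<ge> D N (Wm lam v M) * (qf N (Wm lam v M) x + s)"
      unfolding Wm_Suc s_def using rank1[OF pd] .
    have "D N (Wm lam v M) * (qf N (Wm lam v M) x + s) \<ge> D N (Wm lam v M) * ((3/2) * qf N (Wm lam v M) x)"
      using x D0 unfolding s_def[symmetric] by (intro mult_left_mono) auto
    with r have "D N (Wm lam v (Suc M)) * qf N (Wm lam v M) x \<ge> ((3/2) * D N (Wm lam v M)) * qf N (Wm lam v M) x"
      by (simp add: algebra_simps)
    then show ?thesis using q by simp
  qed
  have cardS: "card {i. i < Suc M \<and> G i} = card {i. i < M \<and> G i} + (if G M then 1 else 0)"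
  proof -
    have e: "{i. i < Suc M \<and> G i} = {i. i < M \<and> G i} \<union> (if G M then {M} else {})"
      by (auto simp: less_Suc_eq)
    show ?thesis unfolding e by (auto simp: card_insert_if)
  qed
  have IH: "lam ^ N * (3/2) ^ card {i. i < M \<and> G i} \<le> D N (Wm lam v M)"
    using Suc.IH unfolding G_def .
  show ?case
  proof (cases "G M")
    case True
    have "lam ^ N * (3/2) ^ card {i. i < Suc M \<and> G i} = (3/2) * (lam ^ N * (3/2) ^ card {i. i < M \<and> G i})"
      unfolding cardS using True by simp
    also have "\<dots> \<le> (3/2) * D N (Wm lam v M)" using IH by simp
    also have "\<dots> \<le> D N (Wm lam v (Suc M))" using big True by simp
    finally show ?thesis unfolding G_def .
  next
    case False
    have "lam ^ N * (3/2) ^ card {i. i < Suc M \<and> G i} = lam ^ N * (3/2) ^ card {i. i < M \<and> G i}"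
      unfolding cardS using False by simp
    also have "\<dots> \<le> D N (Wm lam v (Suc M))" using IH mono by simp
    finally show ?thesis unfolding G_def .
  qed
qed

lemma potential_upper:
  assumes lam: "lam > 0" and B: "\<And>j a. j < M \<Longrightarrow> a < N \<Longrightarrow> (v j a)^2 \<le> B"
  shows "D N (Wm lam v M) \<le> (lam + real M * B) ^ N"
proof -
  have pd: "PD N (Wm lam v M)" using PD_Wm[OF lam] .
  have "D N (Wm lam v M) \<le> (\<Prod>a<N. Wm lam v M a a)" using hadamard[OF pd] by simp
  also have "\<dots> \<le> (\<Prod>a<N. lam + real M * B)"
  proof (rule prod_mono)
    fix a assume a: "a \<in> {..<N}"
    have "(\<Sum>j<M. v j a * v j a) \<le> (\<Sum>j<M. B)"
      using B a by (intro sum_mono) (auto simp: power2_eq_square)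
    moreover have "(\<Sum>j<M. v j a * v j a) \<ge> 0" by (intro sum_nonneg) auto
    ultimately show "0 \<le> Wm lam v M a a \<and> Wm lam v M a a \<le> lam + real M * B"
      unfolding Wm_def using lam by simp
  qed
  also have "\<dots> = (lam + real M * B) ^ N" by simp
  finally show ?thesis .
qed

lemma ip_sym: "ip d x y = ip d y x"
  unfolding ip_def by (simp add: mult.commute)

lemma ip_nonneg: "ip d x x \<ge> 0"
  unfolding ip_def by (intro sum_nonneg) auto

lemma ip_diff_left: "ip d (\<lambda>i. x i - y i) z = ip d x z - ip d y z"
  unfolding ip_def by (simp add: sum_subtractf algebra_simps)

lemma ip_diff_right: "ip d z (\<lambda>i. x i - y i) = ip d z x - ip d z y"
  unfolding ip_def by (simp add: sum_subtractf algebra_simps)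

lemma ip_add_right: "ip d z (\<lambda>i. x i + y i) = ip d z x + ip d z y"
  unfolding ip_def by (simp add: sum.distrib algebra_simps)

lemma ip_scale_right: "ip d z (\<lambda>i. c * x i) = c * ip d z x"
  unfolding ip_def by (simp add: sum_distrib_left algebra_simps)

lemma ip_sum_right: "ip d z (\<lambda>i. \<Sum>j\<in>J. c j * f j i) = (\<Sum>j\<in>J. c j * ip d z (f j))"
  unfolding ip_def by (simp add: sum_distrib_left sum.swap[of _ J] algebra_simps)

lemma ip_sq_diff: "ip d (\<lambda>i. x i - c * y i) (\<lambda>i. x i - c * y i) = ip d x x - 2 * c * ip d x y + c^2 * ip d y y"
  unfolding ip_def by (simp add: sum_subtractf sum.distrib sum_distrib_left algebra_simps power2_eq_square)

lemma ip_sq_add: "ip d (\<lambda>i. x i + c * y i) (\<lambda>i. x i + c * y i) = ip d x x + 2 * c * ip d x y + c^2 * ip d y y"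
  unfolding ip_def by (simp add: sum.distrib sum_distrib_left algebra_simps power2_eq_square)

lemma ip_diff_le: "ip d (\<lambda>i. x i - y i) (\<lambda>i. x i - y i) \<le> 2 * ip d x x + 2 * ip d y y"
proof -
  have "ip d (\<lambda>i. x i + y i) (\<lambda>i. x i + y i) \<ge> 0" by (rule ip_nonneg)
  moreover have "ip d (\<lambda>i. x i - y i) (\<lambda>i. x i - y i) + ip d (\<lambda>i. x i + y i) (\<lambda>i. x i + y i) = 2 * ip d x x + 2 * ip d y y"
    unfolding ip_def by (simp add: sum.distrib[symmetric] sum_distrib_left algebra_simps power2_eq_square)
  ultimately show ?thesis by linarith
qed

lemma sum_upd_shift:
  fixes f g :: "nat \<Rightarrow> real" and t :: real
  assumes "j < n"
  shows "(\<Sum>l<n. (f(j := f j + t)) l * g l) = (\<Sum>l<n. f l * g l) + t * g j"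
proof -
  have "(\<Sum>l<n. (f(j := f j + t)) l * g l) = (\<Sum>l<n. f l * g l + (if l = j then t * g j else 0))"
    by (intro sum.cong refl) (auto simp: ring_distribs)
  also have "\<dots> = (\<Sum>l<n. f l * g l) + t * g j" using assms by (simp add: sum.distrib)
  finally show ?thesis .
qed

lemma sq_le_of_sqrt_le: "m \<ge> 0 \<Longrightarrow> q \<ge> 0 \<Longrightarrow> m \<le> sqrt q \<Longrightarrow> m^2 \<le> q"
  by (metis power_mono real_sqrt_pow2)

lemma sqrt_lt_sq: "q \<ge> 0 \<Longrightarrow> sqrt q < a \<Longrightarrow> q < a^2"
proof -
  assume q: "q \<ge> 0" and a: "sqrt q < a"
  have "(sqrt q)^2 < a^2" using a q by (intro power_strict_mono) auto
  then show ?thesis using q by simp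
qed

lemma separation:
  fixes xs :: "(nat \<Rightarrow> real) list" and x :: "nat \<Rightarrow> real" and K :: real
  defines "g \<equiv> (\<lambda>j i. (xs ! (j+1)) i - (xs ! j) i)"
  assumes nd: "\<not> Inf {vnorm d (\<lambda>i. x i - (xs ! 0) i - (\<Sum>j<length xs - 1. \<alpha> j * ((xs ! (j+1)) i - (xs ! j) i)))
           | \<alpha> :: nat \<Rightarrow> real. \<forall>j<length xs - 1. 0 \<le> \<alpha> j} \<le> \<epsilon>"
    and eps: "\<epsilon> > 0" "\<epsilon> < 1" and K: "K \<ge> 0"
    and nx: "ip d x x \<le> 1" and nxs: "\<And>y. y \<in> set xs \<Longrightarrow> ip d y y \<le> 1" and ne: "xs \<noteq> []"
  shows "\<exists>r \<theta>. \<theta> \<ge> 0 \<and> (\<forall>j<length xs - 1. ip d r (g j) \<le> \<theta>) \<and>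
           ip d r (\<lambda>i. x i - (xs ! 0) i) > \<epsilon> * sqrt (ip d r r) + K * \<theta>"
proof -
  define s where "s = length xs - 1"
  define t1 where "t1 = xs ! 0"
  define R where "R \<alpha> = (\<lambda>i. x i - t1 i - (\<Sum>j<s. \<alpha> j * g j i))" for \<alpha>
  define A where "A = {vnorm d (R \<alpha>) | \<alpha>. \<forall>j<s. 0 \<le> \<alpha> j}"
  have Aeq: "A = {vnorm d (\<lambda>i. x i - (xs ! 0) i - (\<Sum>j<length xs - 1. \<alpha> j * ((xs ! (j+1)) i - (xs ! j) i)))
           | \<alpha> :: nat \<Rightarrow> real. \<forall>j<length xs - 1. 0 \<le> \<alpha> j}"
    unfolding A_def R_def s_def t1_def g_def by simp
  define m where "m = Inf A"
  have mgt: "m > \<epsilon>" using nd unfolding m_def Aeq by simp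
  have t1in: "t1 \<in> set xs" unfolding t1_def using ne by simp
  have gn: "ip d (g j) (g j) \<le> 4" if "j < s" for j
  proof -
    have "xs ! (j+1) \<in> set xs" "xs ! j \<in> set xs" using that unfolding s_def by auto
    then have "ip d (xs ! (j+1)) (xs ! (j+1)) \<le> 1" "ip d (xs ! j) (xs ! j) \<le> 1" using nxs by auto
    then show ?thesis unfolding g_def using ip_diff_le[of d "xs ! (j+1)" "xs ! j"] by linarith
  qed
  have Ane: "vnorm d (R (\<lambda>_. 0)) \<in> A" unfolding A_def by auto
  have bdd: "bdd_below A" unfolding A_def vnorm_def by (rule bdd_belowI[of _ 0]) (auto simp: ip_nonneg)
  have mle: "m \<le> vnorm d (R \<alpha>)" if "\<forall>j<s. 0 \<le> \<alpha> j" for \<alpha>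
    unfolding m_def using that bdd by (intro cInf_lower) (auto simp: A_def)
  have R0: "R (\<lambda>_. 0) = (\<lambda>i. x i - t1 i)" unfolding R_def by simp
  have m2: "m \<le> 2"
  proof -
    have "ip d (\<lambda>i. x i - t1 i) (\<lambda>i. x i - t1 i) \<le> 4"
      using ip_diff_le[of d x t1] nx nxs[OF t1in] by simp
    then have "sqrt (ip d (\<lambda>i. x i - t1 i) (\<lambda>i. x i - t1 i)) \<le> sqrt 4" by (rule real_sqrt_le_mono)
    then have "vnorm d (R (\<lambda>_. 0)) \<le> 2" unfolding R0 vnorm_def by simp
    then show ?thesis using mle[of "\<lambda>_. 0"] by simp
  qed
  have m0: "m > 0" using mgt eps by simp
  define \<theta> where "\<theta> = (m^2 - \<epsilon> * m) / (K + 3)"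
  have em: "\<epsilon> * m < m^2" using mgt m0 by (simp add: power2_eq_square)
  have th0: "\<theta> > 0" unfolding \<theta>_def using em K by simp
  have thK: "(K + 3) * \<theta> = m^2 - \<epsilon> * m" unfolding \<theta>_def using K by simp
  have thle: "\<theta> \<le> 4/3"
  proof -
    have "m^2 \<le> 2^2" using m2 m0 by (intro power_mono) auto
    moreover have "\<epsilon> * m > 0" using eps m0 by simp
    ultimately have "(K+3) * \<theta> \<le> 4" using thK by simp
    moreover have "3 * \<theta> \<le> (K+3) * \<theta>" using K th0 by (intro mult_right_mono) auto
    ultimately show ?thesis by simp
  qed
  define \<delta> where "\<delta> = min 1 (min \<theta> (\<theta>^2 / 130))"
  have d0: "\<delta> > 0" unfolding \<delta>_def using th0 by simp
  have d1: "\<delta> \<le> 1" "\<delta> \<le> \<theta>" "\<delta> \<le> \<theta>^2 / 130" unfolding \<delta>_def by auto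
  obtain \<alpha> where \<alpha>: "\<forall>j<s. 0 \<le> \<alpha> j" "vnorm d (R \<alpha>) < m + \<delta>"
  proof -
    have "A \<noteq> {}" using Ane by blast
    moreover have "Inf A < m + \<delta>" using d0 unfolding m_def by simp
    ultimately obtain a where "a \<in> A" "a < m + \<delta>" using cInf_lessD by blast
    then show ?thesis using that unfolding A_def by blast
  qed
  define r where "r = R \<alpha>"
  define Qr where "Qr = ip d r r"
  have Qr0: "Qr \<ge> 0" unfolding Qr_def by (rule ip_nonneg)
  have sQ: "sqrt Qr < m + \<delta>" using \<alpha>(2) unfolding r_def Qr_def vnorm_def .
  have Qrup: "Qr < (m + \<delta>)^2" using sqrt_lt_sq[OF Qr0 sQ] .
  have Qrlow: "m^2 \<le> Qr"
  proof -
    have "m \<le> sqrt Qr" using mle[OF \<alpha>(1)] unfolding r_def Qr_def vnorm_def .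
    then show ?thesis using m0 Qr0 sq_le_of_sqrt_le by simp
  qed
  define \<delta>' where "\<delta>' = (m + \<delta>)^2 - m^2"
  have dd: "\<delta>' \<le> \<theta>^2 / 26"
  proof -
    have "\<delta>' = \<delta> * (2 * m + \<delta>)" unfolding \<delta>'_def by (simp add: algebra_simps power2_eq_square)
    also have "\<dots> \<le> \<delta> * 5" using d0 d1 m2 by (intro mult_left_mono) auto
    also have "\<dots> \<le> \<theta>^2 / 26" using d1 by simp
    finally show ?thesis .
  qed
  have gen: "ip d r (g j) \<le> \<theta>" if j: "j < s" for j
  proof -
    define t where "t = \<theta> / 4"
    have t0: "t > 0" unfolding t_def using th0 by simp
    define \<alpha>' where "\<alpha>' = \<alpha>(j := \<alpha> j + t)"
    have a': "\<forall>l<s. 0 \<le> \<alpha>' l" using \<alpha>(1) t0 unfolding \<alpha>'_def by auto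
    have Ra: "R \<alpha>' = (\<lambda>i. r i - t * g j i)"
      unfolding r_def R_def \<alpha>'_def using sum_upd_shift[OF j, of \<alpha> t] by (simp add: algebra_simps)
    have "m \<le> vnorm d (R \<alpha>')" using mle[OF a'] .
    then have "m^2 \<le> ip d (R \<alpha>') (R \<alpha>')" unfolding vnorm_def
      using sq_le_of_sqrt_le[OF less_imp_le[OF m0] ip_nonneg] by simp
    also have "\<dots> = Qr - 2 * t * ip d r (g j) + t^2 * ip d (g j) (g j)"
      unfolding Ra Qr_def by (rule ip_sq_diff)
    finally have "2 * t * ip d r (g j) \<le> Qr - m^2 + t^2 * ip d (g j) (g j)" by simp
    also have "\<dots> \<le> \<delta>' + t^2 * 4"
    proof -
      have "t^2 * ip d (g j) (g j) \<le> t^2 * 4" using gn[OF j] by (intro mult_left_mono) auto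
      then show ?thesis using Qrup unfolding \<delta>'_def by simp
    qed
    finally have "2 * t * ip d r (g j) \<le> \<delta>' + t^2 * 4" .
    then have "ip d r (g j) \<le> (\<delta>' + t^2 * 4) / (2 * t)" using t0 by (simp add: field_simps)
    also have "\<dots> = \<delta>' / (2 * t) + 2 * t" using t0 by (simp add: field_simps power2_eq_square)
    also have "\<dots> \<le> \<theta>" 
    proof -
      have "\<delta>' / (2 * t) \<le> (\<theta>^2 / 26) / (2 * t)" using dd t0 by (intro divide_right_mono) auto
      also have "\<dots> = \<theta> / 13" unfolding t_def using th0 by (simp add: field_simps power2_eq_square)
      finally have h: "\<delta>' / (2 * t) \<le> \<theta> / 13" .
      have "2 * t = \<theta> / 2" unfolding t_def by simp
      then show ?thesis using h th0 by linarith
    qed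
    finally show ?thesis .
  qed
  define P where "P = (\<lambda>i. \<Sum>j<s. \<alpha> j * g j i)"
  have rP: "r = (\<lambda>i. x i - t1 i - P i)" unfolding r_def R_def P_def by simp
  have QP: "ip d P P \<le> 26"
  proof -
    define y where "y = (\<lambda>i. x i - t1 i)"
    have Pe: "P = (\<lambda>i. y i - r i)" unfolding rP y_def by simp
    have "ip d P P \<le> 2 * ip d y y + 2 * Qr"
      unfolding Qr_def Pe by (rule ip_diff_le)
    moreover have "ip d y y \<le> 4"
      unfolding y_def using ip_diff_le[of d x t1] nx nxs[OF t1in] by simp
    moreover have "Qr \<le> 9"
    proof -
      have "(m + \<delta>)^2 \<le> 3^2" using m2 d1 m0 d0 by (intro power_mono) auto
      then show ?thesis using Qrup by simp
    qed
    ultimately show ?thesis by simp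
  qed
  have ipP: "ip d r P \<ge> - \<theta>"
  proof -
    define l where "l = \<theta> / 26"
    have l0: "l > 0" "l \<le> 1" unfolding l_def using th0 thle by auto
    define \<alpha>' where "\<alpha>' = (\<lambda>j. (1 - l) * \<alpha> j)"
    have a': "\<forall>j<s. 0 \<le> \<alpha>' j" using \<alpha>(1) l0 unfolding \<alpha>'_def by simp
    have Ra: "R \<alpha>' = (\<lambda>i. r i + l * P i)"
      unfolding rP R_def \<alpha>'_def P_def by (simp add: algebra_simps sum_distrib_left sum_subtractf)
    have "m \<le> vnorm d (R \<alpha>')" using mle[OF a'] .
    then have "m^2 \<le> ip d (R \<alpha>') (R \<alpha>')" unfolding vnorm_def
      using sq_le_of_sqrt_le[OF less_imp_le[OF m0] ip_nonneg] by simp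
    also have "\<dots> = Qr + 2 * l * ip d r P + l^2 * ip d P P"
      unfolding Ra Qr_def by (rule ip_sq_add)
    finally have "- 2 * l * ip d r P \<le> Qr - m^2 + l^2 * ip d P P" by simp
    also have "\<dots> \<le> \<delta>' + l^2 * 26"
    proof -
      have "l^2 * ip d P P \<le> l^2 * 26" using QP by (intro mult_left_mono) auto
      then show ?thesis using Qrup unfolding \<delta>'_def by simp
    qed
    finally have "- 2 * l * ip d r P \<le> \<delta>' + l^2 * 26" .
    then have "- ip d r P \<le> (\<delta>' + l^2 * 26) / (2 * l)" using l0 by (simp add: field_simps)
    also have "\<dots> = \<delta>' / (2 * l) + 13 * l" using l0 by (simp add: field_simps power2_eq_square)
    also have "\<dots> \<le> \<theta>"
    proof -
      have "\<delta>' / (2 * l) \<le> (\<theta>^2 / 26) / (2 * l)" using dd l0 by (intro divide_right_mono) auto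
      also have "\<dots> = \<theta> / 2" unfolding l_def using th0 by (simp add: field_simps power2_eq_square)
      finally have h: "\<delta>' / (2 * l) \<le> \<theta> / 2" .
      have "13 * l = \<theta> / 2" unfolding l_def by simp
      then show ?thesis using h th0 by linarith
    qed
    finally show ?thesis by simp
  qed
  have main: "ip d r (\<lambda>i. x i - t1 i) > m^2 - \<theta> - \<theta>/2"
  proof -
    have "(\<lambda>i. x i - t1 i) = (\<lambda>i. r i + P i)" unfolding rP by simp
    then have "ip d r (\<lambda>i. x i - t1 i) = Qr + ip d r P" unfolding Qr_def by (simp add: ip_add_right)
    then show ?thesis using Qrlow ipP th0 by linarith
  qed
  have fin: "\<epsilon> * sqrt Qr + K * \<theta> < m^2 - \<theta> - \<theta>/2"
  proof -
    have "\<epsilon> * sqrt Qr < \<epsilon> * (m + \<delta>)" using sQ eps by simp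
    moreover have "\<epsilon> * \<delta> \<le> \<theta>"
    proof -
      have "\<epsilon> * \<delta> \<le> 1 * \<delta>" using eps d0 by (intro mult_right_mono) auto
      then show ?thesis using d1 by simp
    qed
    ultimately have "\<epsilon> * sqrt Qr < \<epsilon> * m + \<theta>" by (simp add: algebra_simps)
    then show ?thesis using thK th0 by (simp add: algebra_simps)
  qed
  show ?thesis
  proof (intro exI conjI)
    show "\<theta> \<ge> 0" using th0 by simp
    show "\<forall>j<length xs - 1. ip d r (g j) \<le> \<theta>" using gen unfolding s_def by blast
    show "ip d r (\<lambda>i. x i - (xs ! 0) i) > \<epsilon> * sqrt (ip d r r) + K * \<theta>"
      using main fin unfolding t1_def Qr_def by linarith
  qed
qed

definition orthonormal :: "nat \<Rightarrow> nat \<Rightarrow> (nat \<Rightarrow> nat \<Rightarrow> real) \<Rightarrow> bool" where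
  "orthonormal d N b \<longleftrightarrow> (\<forall>j<N. \<forall>l<N. ip d (b j) (b l) = (if j = l then 1 else 0))"

definition inspan :: "nat \<Rightarrow> (nat \<Rightarrow> nat \<Rightarrow> real) \<Rightarrow> (nat \<Rightarrow> real) \<Rightarrow> bool" where
  "inspan N b y \<longleftrightarrow> (\<exists>c. \<forall>i. y i = (\<Sum>j<N. c j * b j i))"

lemma intrinsic_dim_basis:
  assumes "\<forall>x\<in>S. in_Rd d x"
  obtains b where "orthonormal d (intrinsic_dim d S) b" "\<forall>x\<in>S. inspan (intrinsic_dim d S) b x"
proof -
  define P where "P k \<longleftrightarrow> (\<exists>b :: nat \<Rightarrow> nat \<Rightarrow> real.
      (\<forall>j<k. in_Rd d (b j)) \<and>
      (\<forall>j<k. \<forall>l<k. ip d (b j) (b l) = (if j = l then 1 else 0)) \<and>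
      (\<forall>x\<in>S. \<exists>c :: nat \<Rightarrow> real. \<forall>i. x i = (\<Sum>j<k. c j * b j i)))" for k
  have "P d"
  proof -
    define e where "e = (\<lambda>j::nat. \<lambda>i::nat. if i = j then (1::real) else 0)"
    have "\<forall>j<d. in_Rd d (e j)" unfolding e_def in_Rd_def by auto
    moreover have "\<forall>j<d. \<forall>l<d. ip d (e j) (e l) = (if j = l then 1 else 0)"
    proof (intro allI impI)
      fix j l assume "j < d" "l < d"
      have "ip d (e j) (e l) = (\<Sum>i<d. if i = j then (if j = l then 1 else 0) else 0)"
        unfolding ip_def e_def by (intro sum.cong) auto
      then show "ip d (e j) (e l) = (if j = l then 1 else 0)" using \<open>j < d\<close> by simp
    qed
    moreover have "\<forall>x\<in>S. \<exists>c. \<forall>i. x i = (\<Sum>j<d. c j * e j i)"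
    proof
      fix x assume "x \<in> S"
      then have xz: "\<And>i. i \<ge> d \<Longrightarrow> x i = 0" using assms unfolding in_Rd_def by blast
      have "\<forall>i. x i = (\<Sum>j<d. x j * e j i)"
      proof
        fix i
        have "(\<Sum>j<d. x j * e j i) = (\<Sum>j<d. if i = j then x i else 0)"
          unfolding e_def by (intro sum.cong) auto
        also have "\<dots> = (if i < d then x i else 0)" by simp
        also have "\<dots> = x i" using xz by simp
        finally show "x i = (\<Sum>j<d. x j * e j i)" by simp
      qed
      then show "\<exists>c. \<forall>i. x i = (\<Sum>j<d. c j * e j i)" by blast
    qed
    ultimately show ?thesis unfolding P_def by blast
  qed
  then have "P (Least P)" by (rule LeastI)
  moreover have "intrinsic_dim d S = Least P" unfolding intrinsic_dim_def P_def by simp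
  ultimately show ?thesis using that unfolding P_def orthonormal_def inspan_def by auto
qed

lemma ip_sum_left: "ip d (\<lambda>i. \<Sum>j\<in>J. c j * f j i) z = (\<Sum>j\<in>J. c j * ip d (f j) z)"
proof -
  have "ip d (\<lambda>i. \<Sum>j\<in>J. c j * f j i) z = ip d z (\<lambda>i. \<Sum>j\<in>J. c j * f j i)" by (rule ip_sym)
  also have "\<dots> = (\<Sum>j\<in>J. c j * ip d z (f j))" by (rule ip_sum_right)
  also have "\<dots> = (\<Sum>j\<in>J. c j * ip d (f j) z)" by (simp add: ip_sym)
  finally show ?thesis .
qed

lemma inspan_coord:
  assumes on: "orthonormal d N b" and y: "inspan N b y"
  shows "ip d z y = (\<Sum>a<N. ip d z (b a) * ip d y (b a))"
proof -
  obtain c where c: "\<And>i. y i = (\<Sum>j<N. c j * b j i)" using y unfolding inspan_def by blast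
  have ye: "y = (\<lambda>i. \<Sum>j<N. c j * b j i)" using c by auto
  have ca: "ip d y (b a) = c a" if a: "a < N" for a
  proof -
    have "ip d y (b a) = (\<Sum>j<N. c j * ip d (b j) (b a))" unfolding ye by (rule ip_sum_left)
    also have "\<dots> = (\<Sum>j<N. if j = a then c a else 0)"
      using on a unfolding orthonormal_def by (intro sum.cong) auto
    also have "\<dots> = c a" using a by simp
    finally show ?thesis .
  qed
  have "ip d z y = (\<Sum>j<N. c j * ip d z (b j))" unfolding ye by (rule ip_sum_right)
  also have "\<dots> = (\<Sum>a<N. ip d z (b a) * ip d y (b a))" using ca by (intro sum.cong) auto
  finally show ?thesis .
qed

lemma bessel:
  assumes on: "orthonormal d N b"
  shows "(\<Sum>a<N. (ip d z (b a))^2) \<le> ip d z z"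
proof -
  define \<eta> where "\<eta> a = ip d z (b a)" for a
  define w where "w = (\<lambda>i. \<Sum>a<N. \<eta> a * b a i)"
  have ww: "ip d w w = (\<Sum>a<N. (\<eta> a)^2)"
  proof -
    have "ip d w w = (\<Sum>a<N. \<eta> a * ip d (b a) w)" unfolding w_def by (rule ip_sum_left)
    also have "\<dots> = (\<Sum>a<N. \<eta> a * \<eta> a)"
    proof (intro sum.cong refl)
      fix a assume "a \<in> {..<N}"
      then have a: "a < N" by simp
      have "ip d (b a) w = (\<Sum>j<N. \<eta> j * ip d (b a) (b j))" unfolding w_def by (rule ip_sum_right)
      also have "\<dots> = (\<Sum>j<N. if j = a then \<eta> a else 0)"
        using on a unfolding orthonormal_def by (intro sum.cong) auto
      also have "\<dots> = \<eta> a" using a by simp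
      finally show "\<eta> a * ip d (b a) w = \<eta> a * \<eta> a" by simp
    qed
    finally show ?thesis by (simp add: power2_eq_square)
  qed
  have zw: "ip d z w = (\<Sum>a<N. (\<eta> a)^2)"
    unfolding w_def ip_sum_right \<eta>_def by (simp add: power2_eq_square)
  have "0 \<le> ip d (\<lambda>i. z i - 1 * w i) (\<lambda>i. z i - 1 * w i)" by (rule ip_nonneg)
  also have "\<dots> = ip d z z - 2 * ip d z w + ip d w w" using ip_sq_diff[of d z 1 w] by simp
  finally show ?thesis using ww zw unfolding \<eta>_def by simp
qed

lemma inspan_diff: "inspan N b x \<Longrightarrow> inspan N b y \<Longrightarrow> inspan N b (\<lambda>i. x i - y i)"
proof -
  assume "inspan N b x" "inspan N b y"
  then obtain c c' where "\<And>i. x i = (\<Sum>j<N. c j * b j i)" "\<And>i. y i = (\<Sum>j<N. c' j * b j i)"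
    unfolding inspan_def by blast
  then have "\<forall>i. x i - y i = (\<Sum>j<N. (c j - c' j) * b j i)" by (simp add: sum_subtractf algebra_simps)
  then show ?thesis unfolding inspan_def by (intro exI[where x="\<lambda>j. c j - c' j"]) simp
qed

lemma sorted_wrt_unique:
  assumes asym: "\<And>a b. R a b \<Longrightarrow> \<not> R b a"
  shows "sorted_wrt R xs \<Longrightarrow> sorted_wrt R ys \<Longrightarrow> set xs = set ys \<Longrightarrow> xs = ys"
proof (induction xs arbitrary: ys)
  case Nil then show ?case by simp
next
  case (Cons a as)
  then obtain b bs where ys: "ys = b # bs" by (cases ys) auto
  have irr: "\<And>a. \<not> R a a" using asym by blast
  have ab: "a = b"
  proof (rule ccontr)
    assume "a \<noteq> b"
    then have "b \<in> set as" "a \<in> set bs" using Cons.prems ys by (auto simp: set_eq_iff)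
    then have "R a b" "R b a" using Cons.prems ys by auto
    then show False using asym by blast
  qed
  have "a \<notin> set as" using Cons.prems(1) irr by auto
  moreover have "b \<notin> set bs" using Cons.prems(2) irr ys by auto
  ultimately have "set as = set bs" using Cons.prems(3) ys ab by auto
  then have "as = bs" using Cons.IH Cons.prems ys by simp
  then show ?case using ys ab by simp
qed

lemma exists_sorted:
  fixes f :: "'a \<Rightarrow> real"
  assumes fin: "finite S" and inj: "inj_on f S"
  shows "\<exists>xs. set xs = S \<and> sorted_wrt (\<lambda>a b. f b < f a) xs \<and> distinct xs"
proof -
  define ks where "ks = rev (sorted_list_of_set (f ` S))"
  define xs where "xs = map (the_inv_into S f) ks"
  have setks: "set ks = f ` S" unfolding ks_def using fin by simp
  have sk: "sorted_wrt (\<lambda>a b. b < a) ks"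
    unfolding ks_def sorted_wrt_rev using strict_sorted_list_of_set[of "f ` S"] by simp
  have fx: "\<And>k. k \<in> set ks \<Longrightarrow> f (the_inv_into S f k) = k"
    using setks f_the_inv_into_f[OF inj] by auto
  have "set xs = the_inv_into S f ` f ` S" unfolding xs_def using setks by simp
  also have "\<dots> = S" using the_inv_into_f_f[OF inj] by force
  finally have s: "set xs = S" .
  have "sorted_wrt (\<lambda>a b. f (the_inv_into S f b) < f (the_inv_into S f a)) ks"
    using sk by (rule sorted_wrt_mono_rel[rotated]) (simp add: fx)
  then have so: "sorted_wrt (\<lambda>a b. f b < f a) xs" unfolding xs_def sorted_wrt_map .
  have "distinct xs" using so by (induction xs) auto
  then show ?thesis using s so by blast
qed

lemma sorted_desc_eq:
  assumes "set xs = T" "sorted_wrt (\<lambda>a b. ip d u b < ip d u a) xs"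
  shows "sorted_desc d u T = xs"
  unfolding sorted_desc_def
proof (rule the_equality)
  show "set xs = T \<and> sorted_wrt (\<lambda>a b. ip d u b < ip d u a) xs" using assms by simp
  fix ys assume "set ys = T \<and> sorted_wrt (\<lambda>a b. ip d u b < ip d u a) ys"
  then show "ys = xs" using sorted_wrt_unique[of "\<lambda>a b. ip d u b < ip d u a" ys xs] assms by auto
qed

lemma remove_nth_sorted:
  assumes so: "sorted_wrt R L" and di: "distinct L" and k: "k < length L"
  shows "sorted_wrt R (take k L @ drop (Suc k) L)" and "set (take k L @ drop (Suc k) L) = set L - {L ! k}"
    and "length (take k L @ drop (Suc k) L) = length L - 1"
proof -
  have L: "L = take k L @ (L ! k) # drop (Suc k) L" using k by (simp add: id_take_nth_drop)
  have "sorted_wrt R (take k L @ (L ! k) # drop (Suc k) L)" using so L by simp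
  then show "sorted_wrt R (take k L @ drop (Suc k) L)" unfolding sorted_wrt_append by simp
  have "distinct (take k L @ (L ! k) # drop (Suc k) L)" using di L by simp
  then show "set (take k L @ drop (Suc k) L) = set L - {L ! k}"
    by (subst (3) L) auto
  show "length (take k L @ drop (Suc k) L) = length L - 1" using k by simp
qed

lemma sum_sq_le_sq_sum:
  fixes f :: "'a \<Rightarrow> real"
  assumes "finite A" "\<And>x. x \<in> A \<Longrightarrow> f x \<ge> 0"
  shows "(\<Sum>x\<in>A. (f x)^2) \<le> (\<Sum>x\<in>A. f x)^2"
  using assms
proof (induction A rule: finite_induct)
  case empty then show ?case by simp
next
  case (insert a A)
  have s: "(\<Sum>x\<in>A. f x) \<ge> 0" using insert.prems by (intro sum_nonneg) auto
  have fa: "f a \<ge> 0" using insert.prems by simp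
  have "(\<Sum>x\<in>insert a A. (f x)^2) = (f a)^2 + (\<Sum>x\<in>A. (f x)^2)" using insert by simp
  also have "\<dots> \<le> (f a)^2 + (\<Sum>x\<in>A. f x)^2" using insert by simp
  also have "\<dots> \<le> (f a + (\<Sum>x\<in>A. f x))^2" using s fa by (simp add: power2_eq_square algebra_simps)
  also have "\<dots> = (\<Sum>x\<in>insert a A. f x)^2" using insert by simp
  finally show ?case .
qed

lemma bad_step:
  fixes L :: "(nat \<Rightarrow> real) list" and b :: "nat \<Rightarrow> nat \<Rightarrow> real" and d :: nat
  defines "v \<equiv> (\<lambda>j a. ip d (\<lambda>i. (L ! Suc j) i - (L ! j) i) (b a))"
  assumes on: "orthonormal d N b" and spanS: "\<forall>x\<in>S. inspan N b x"
    and norms: "\<forall>x\<in>S. ip d x x \<le> 1"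
    and Lset: "set L = S" and Lsort: "sorted_wrt (\<lambda>a b. ip d u b < ip d u a) L" and Ldist: "distinct L"
    and k: "1 \<le> k" "k < length L"
    and nd: "\<not> derives d u \<epsilon> (S - {L ! k}) (L ! k)" and eps: "0 < \<epsilon>" "\<epsilon> < 1"
  shows "\<exists>x. 0 < (\<Sum>a<N. x a * v (k-1) a)^2 \<and> qf N (Wm (\<epsilon>^2) v (k-1)) x \<le> 2 * (\<Sum>a<N. x a * v (k-1) a)^2"
proof -
  define n where "n = length L"
  define xs where "xs = take k L @ drop (Suc k) L"
  have kn: "k < n" using k unfolding n_def by simp
  have xs1: "sorted_wrt (\<lambda>a b. ip d u b < ip d u a) xs" "set xs = set L - {L ! k}" "length xs = n - 1"
    using remove_nth_sorted[OF Lsort Ldist k(2)] unfolding xs_def n_def by auto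
  have sd: "sorted_desc d u (S - {L ! k}) = xs" using sorted_desc_eq[OF _ xs1(1)] xs1(2) Lset by simp
  have xsnth: "xs ! j = L ! j" if "j < k" for j
    unfolding xs_def using that kn unfolding n_def by (simp add: nth_append)
  have ne: "xs \<noteq> []" using xs1(3) k kn by auto
  have nd': "\<not> Inf {vnorm d (\<lambda>i. (L ! k) i - (xs ! 0) i - (\<Sum>j<length xs - 1. \<alpha> j * ((xs ! (j+1)) i - (xs ! j) i)))
           | \<alpha> :: nat \<Rightarrow> real. \<forall>j<length xs - 1. 0 \<le> \<alpha> j} \<le> \<epsilon>"
    using nd unfolding derives_def sd Let_def .
  have Lin: "L ! j \<in> S" if "j < n" for j using that Lset unfolding n_def by auto
  have nx: "ip d (L ! k) (L ! k) \<le> 1" using norms Lin[OF kn] by blast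
  have nxs: "\<And>y. y \<in> set xs \<Longrightarrow> ip d y y \<le> 1" using xs1(2) Lset norms by auto
  obtain r \<theta> where r: "\<theta> \<ge> 0" "\<forall>j<length xs - 1. ip d r (\<lambda>i. (xs ! (j+1)) i - (xs ! j) i) \<le> \<theta>"
      "ip d r (\<lambda>i. (L ! k) i - (xs ! 0) i) > \<epsilon> * sqrt (ip d r r) + (2 * real n) * \<theta>"
    using separation[OF nd' eps, of "2 * real n", OF _ nx nxs ne] by auto
  define \<phi> where "\<phi> j = ip d r (L ! j)" for j
  define \<sigma> where "\<sigma> j = \<phi> (Suc j) - \<phi> j" for j
  have sig: "\<sigma> j \<le> \<theta>" if "j < k - 1" for j
  proof -
    have "j < length xs - 1" using that xs1(3) kn by simp
    then have "ip d r (\<lambda>i. (xs ! (j+1)) i - (xs ! j) i) \<le> \<theta>" using r(2) by blast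
    moreover have "xs ! (j+1) = L ! Suc j" "xs ! j = L ! j" using that xsnth by auto
    ultimately show ?thesis unfolding \<sigma>_def \<phi>_def by (simp add: ip_diff_right)
  qed
  have top: "\<phi> k - \<phi> 0 > \<epsilon> * sqrt (ip d r r) + (2 * real n) * \<theta>"
    using r(3) xsnth[of 0] k unfolding \<phi>_def by (simp add: ip_diff_right)
  define \<eta> where "\<eta> a = ip d r (b a)" for a
  have ev: "(\<Sum>a<N. \<eta> a * v j a) = \<sigma> j" if "j < n - 1" for j
  proof -
    have "inspan N b (\<lambda>i. (L ! Suc j) i - (L ! j) i)"
      using inspan_diff spanS Lin that by auto
    from inspan_coord[OF on this, of r]
    show ?thesis unfolding \<sigma>_def \<phi>_def \<eta>_def v_def by (simp add: ip_diff_right)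
  qed
  define a where "a = \<phi> k - \<phi> (k-1)"
  have sa: "\<sigma> (k-1) = a" unfolding a_def \<sigma>_def using k by simp
  have tel: "(\<Sum>j<k-1. \<sigma> j) = \<phi> (k-1) - \<phi> 0" unfolding \<sigma>_def by (rule sum_lessThan_telescope)
  have abs_le: "(\<Sum>j<k-1. \<bar>\<sigma> j\<bar>) \<le> 2 * real (k-1) * \<theta> - (\<phi> (k-1) - \<phi> 0)"
  proof -
    have "(\<Sum>j<k-1. \<bar>\<sigma> j\<bar>) \<le> (\<Sum>j<k-1. 2 * \<theta> - \<sigma> j)"
      using sig r(1) by (intro sum_mono) (auto simp: abs_if)
    also have "\<dots> = 2 * real (k-1) * \<theta> - (\<phi> (k-1) - \<phi> 0)"
      using tel by (simp add: sum_subtractf)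
    finally show ?thesis .
  qed
  define sab where "sab = (\<Sum>j<k-1. \<bar>\<sigma> j\<bar>)"
  have sab0: "sab \<ge> 0" unfolding sab_def by (intro sum_nonneg) auto
  have kk: "2 * real (k-1) * \<theta> \<le> (2 * real n) * \<theta>" using r(1) kn by (intro mult_right_mono) auto
  have aeq: "a = (\<phi> k - \<phi> 0) - (\<phi> (k-1) - \<phi> 0)" unfolding a_def by simp
  have a1: "a > \<epsilon> * sqrt (ip d r r) + sab" using top abs_le kk aeq unfolding sab_def by linarith
  have es0: "\<epsilon> * sqrt (ip d r r) \<ge> 0" using eps ip_nonneg[of d r] by simp
  have apos: "a > 0" using a1 es0 sab0 by linarith
  have qfe: "qf N (Wm (\<epsilon>^2) v (k-1)) \<eta> = \<epsilon>^2 * (\<Sum>a<N. (\<eta> a)^2) + (\<Sum>j<k-1. (\<sigma> j)^2)"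
  proof -
    have "(\<Sum>j<k-1. (\<Sum>a<N. \<eta> a * v j a)^2) = (\<Sum>j<k-1. (\<sigma> j)^2)"
      using ev kn by (intro sum.cong refl) auto
    then show ?thesis unfolding qf_Wm by simp
  qed
  have b1: "\<epsilon>^2 * (\<Sum>a<N. (\<eta> a)^2) \<le> a^2"
  proof -
    have "(\<Sum>a<N. (\<eta> a)^2) \<le> ip d r r" unfolding \<eta>_def by (rule bessel[OF on])
    then have "\<epsilon>^2 * (\<Sum>a<N. (\<eta> a)^2) \<le> \<epsilon>^2 * ip d r r" by (intro mult_left_mono) auto
    also have "\<dots> = (\<epsilon> * sqrt (ip d r r))^2" using ip_nonneg[of d r] by (simp add: power_mult_distrib)
    also have "\<dots> \<le> a^2" using a1 es0 sab0 by (intro power_mono) auto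
    finally show ?thesis .
  qed
  have b2: "(\<Sum>j<k-1. (\<sigma> j)^2) \<le> a^2"
  proof -
    have "(\<Sum>j<k-1. (\<sigma> j)^2) = (\<Sum>j<k-1. \<bar>\<sigma> j\<bar>^2)" by simp
    also have "\<dots> \<le> sab^2" unfolding sab_def by (rule sum_sq_le_sq_sum) auto
    also have "\<dots> \<le> a^2" using a1 es0 sab0 by (intro power_mono) auto
    finally show ?thesis .
  qed
  have ev2: "(\<Sum>a<N. \<eta> a * v (k-1) a) = a" using ev[of "k-1"] kn k sa by simp
  show ?thesis
  proof (intro exI conjI)
    show "0 < (\<Sum>a<N. \<eta> a * v (k-1) a)^2" using ev2 apos by simp
    show "qf N (Wm (\<epsilon>^2) v (k-1)) \<eta> \<le> 2 * (\<Sum>a<N. \<eta> a * v (k-1) a)^2"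
      using qfe b1 b2 ev2 by simp
  qed
qed

lemma good_1d:
  fixes L :: "(nat \<Rightarrow> real) list" and b :: "nat \<Rightarrow> nat \<Rightarrow> real" and d :: nat
  assumes on: "orthonormal d 1 b" and spanS: "\<forall>x\<in>S. inspan 1 b x"
    and Lset: "set L = S" and Lsort: "sorted_wrt (\<lambda>a b. ip d u b < ip d u a) L" and Ldist: "distinct L"
    and k: "1 \<le> k" "k < length L" and n3: "length L \<ge> 3" and eps: "0 < \<epsilon>"
  shows "derives d u \<epsilon> (S - {L ! k}) (L ! k)"
proof -
  define n where "n = length L"
  define xs where "xs = take k L @ drop (Suc k) L"
  have kn: "k < n" using k unfolding n_def by simp
  have xs1: "sorted_wrt (\<lambda>a b. ip d u b < ip d u a) xs" "set xs = set L - {L ! k}" "length xs = n - 1"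
    using remove_nth_sorted[OF Lsort Ldist k(2)] unfolding xs_def n_def by auto
  have sd: "sorted_desc d u (S - {L ! k}) = xs" using sorted_desc_eq[OF _ xs1(1)] xs1(2) Lset by simp
  have x0: "xs ! 0 = L ! 0" unfolding xs_def using k kn unfolding n_def by (simp add: nth_append)
  have len: "length xs - 1 > 0" using xs1(3) n3 unfolding n_def by simp
  have coef: "y = (\<lambda>i. ip d y (b 0) * b 0 i)" if "y \<in> S" for y
  proof -
    have "inspan 1 b y" using spanS that by blast
    then obtain c where c: "\<And>i. y i = (\<Sum>j<1. c j * b j i)" unfolding inspan_def by blast
    have ye: "y = (\<lambda>i. c 0 * b 0 i)"
    proof
      fix i show "y i = c 0 * b 0 i" using c[of i] by simp
    qed
    have "ip d y (b 0) = c 0 * ip d (b 0) (b 0)" unfolding ye ip_def by (simp add: sum_distrib_left algebra_simps)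
    also have "\<dots> = c 0" using on unfolding orthonormal_def by simp
    finally show ?thesis using ye by simp
  qed
  define cf where "cf y = ip d y (b 0)" for y
  define \<beta> where "\<beta> = ip d u (b 0)"
  have ipu: "ip d u y = cf y * \<beta>" if "y \<in> S" for y
  proof -
    have "ip d u y = ip d u (\<lambda>i. cf y * b 0 i)" using coef[OF that] unfolding cf_def by simp
    also have "\<dots> = cf y * \<beta>" unfolding \<beta>_def by (rule ip_scale_right)
    finally show ?thesis .
  qed
  define x where "x = L ! k"
  define y0 where "y0 = xs ! 0"
  define y1 where "y1 = xs ! 1"
  have inS: "x \<in> S" "y0 \<in> S" "y1 \<in> S"
    unfolding x_def y0_def y1_def using Lset kn len xs1(2,3) nth_mem[of k L] nth_mem[of 0 xs] nth_mem[of 1 xs]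
    unfolding n_def by auto
  have o1: "ip d u x < ip d u y0"
    unfolding x_def y0_def x0 using Lsort k unfolding sorted_wrt_iff_nth_less by auto
  have o2: "ip d u y1 < ip d u y0"
    unfolding y1_def y0_def using xs1(1) len unfolding sorted_wrt_iff_nth_less by auto
  have p1: "(cf x - cf y0) * \<beta> < 0" using o1 ipu inS by (simp add: algebra_simps)
  have p2: "(cf y1 - cf y0) * \<beta> < 0" using o2 ipu inS by (simp add: algebra_simps)
  have "((cf x - cf y0) * \<beta>) * ((cf y1 - cf y0) * \<beta>) > 0" using p1 p2 by (simp add: mult_neg_neg)
  moreover have "((cf x - cf y0) * \<beta>) * ((cf y1 - cf y0) * \<beta>) = ((cf x - cf y0) * (cf y1 - cf y0)) * (\<beta> * \<beta>)"
    by (simp only: ac_simps)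
  ultimately have "((cf x - cf y0) * (cf y1 - cf y0)) * (\<beta> * \<beta>) > 0" by simp
  moreover have "\<beta> * \<beta> \<ge> 0" by simp
  ultimately have pp: "(cf x - cf y0) * (cf y1 - cf y0) > 0" by (simp add: zero_less_mult_iff)
  then have ne: "cf y1 - cf y0 \<noteq> 0" by auto
  define \<mu> where "\<mu> = (cf x - cf y0) / (cf y1 - cf y0)"
  have mu0: "\<mu> \<ge> 0"
  proof -
    have "\<mu> = ((cf x - cf y0) * (cf y1 - cf y0)) / (cf y1 - cf y0)^2"
      unfolding \<mu>_def using ne by (simp add: power2_eq_square)
    then show ?thesis using pp by simp
  qed
  have mueq: "\<mu> * (cf y1 - cf y0) = cf x - cf y0" unfolding \<mu>_def using ne by simp
  define \<alpha> where "\<alpha> = (\<lambda>j::nat. if j = 0 then \<mu> else 0)"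
  have a0: "\<forall>j<length xs - 1. 0 \<le> \<alpha> j" unfolding \<alpha>_def using mu0 by simp
  have vec: "(\<lambda>i. x i - (xs ! 0) i - (\<Sum>j<length xs - 1. \<alpha> j * ((xs ! (j+1)) i - (xs ! j) i))) = (\<lambda>i. 0)"
  proof
    fix i
    have "(\<Sum>j<length xs - 1. \<alpha> j * ((xs ! (j+1)) i - (xs ! j) i)) = (\<Sum>j<length xs - 1. if j = 0 then \<mu> * (y1 i - y0 i) else 0)"
      unfolding \<alpha>_def y1_def y0_def by (intro sum.cong) auto
    also have "\<dots> = \<mu> * (y1 i - y0 i)" using len by simp
    finally have sm: "(\<Sum>j<length xs - 1. \<alpha> j * ((xs ! (j+1)) i - (xs ! j) i)) = \<mu> * (y1 i - y0 i)" .
    have h: "x i = cf x * b 0 i" "y0 i = cf y0 * b 0 i" "y1 i = cf y1 * b 0 i"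
      using fun_cong[OF coef[OF inS(1)], of i] fun_cong[OF coef[OF inS(2)], of i] fun_cong[OF coef[OF inS(3)], of i]
      unfolding cf_def by auto
    have "x i - (xs ! 0) i - (\<Sum>j<length xs - 1. \<alpha> j * ((xs ! (j+1)) i - (xs ! j) i))
        = cf x * b 0 i - cf y0 * b 0 i - \<mu> * (cf y1 * b 0 i - cf y0 * b 0 i)"
      unfolding sm y0_def[symmetric] h ..
    also have "\<dots> = (cf x - cf y0 - \<mu> * (cf y1 - cf y0)) * b 0 i" by (simp add: algebra_simps)
    also have "\<dots> = 0" using mueq by simp
    finally show "x i - (xs ! 0) i - (\<Sum>j<length xs - 1. \<alpha> j * ((xs ! (j+1)) i - (xs ! j) i)) = 0" .
  qed
  define A where "A = {vnorm d (\<lambda>i. x i - (xs ! 0) i - (\<Sum>j<length xs - 1. \<alpha> j * ((xs ! (j+1)) i - (xs ! j) i)))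
           | \<alpha> :: nat \<Rightarrow> real. \<forall>j<length xs - 1. 0 \<le> \<alpha> j}"
  have "0 \<in> A"
  proof -
    have "vnorm d (\<lambda>i. 0) = 0" unfolding vnorm_def ip_def by simp
    then have "vnorm d (\<lambda>i. x i - (xs ! 0) i - (\<Sum>j<length xs - 1. \<alpha> j * ((xs ! (j+1)) i - (xs ! j) i))) = 0"
      unfolding vec .
    then show ?thesis unfolding A_def using a0 by (intro CollectI exI[where x=\<alpha>] conjI) simp_all
  qed
  moreover have "bdd_below A" unfolding A_def vnorm_def by (rule bdd_belowI[of _ 0]) (auto simp: ip_nonneg)
  ultimately have "Inf A \<le> 0" by (rule cInf_lower)
  moreover have "derives d u \<epsilon> (S - {L ! k}) (L ! k) \<longleftrightarrow> Inf A \<le> \<epsilon>"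
    unfolding derives_def sd Let_def A_def x_def ..
  ultimately show ?thesis using eps by simp
qed

lemma ln_ge_1_minus_inv: "(x::real) > 0 \<Longrightarrow> ln x \<ge> 1 - 1 / x"
proof -
  assume x: "x > 0"
  have "ln (1 / x) \<le> 1 / x - 1" using x ln_le_minus_one[of "1/x"] by simp
  then show ?thesis using x by (simp add: ln_div)
qed

lemma arith_final:
  fixes \<epsilon> :: real and N n g :: nat
  assumes N: "N \<ge> 2" and eps: "0 < \<epsilon>" "\<epsilon> < 1"
    and pot: "(\<epsilon>^2)^N * (3/2)^g \<le> (\<epsilon>^2 + real (n - 1) * 4)^N"
    and nbig: "real n \<ge> 4 * real_of_int \<lceil>1000 * real N * ln (real N / \<epsilon>)\<rceil>"
  shows "1 + real g \<le> real n / 4"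
proof -
  define L where "L = ln (real N / \<epsilon>)"
  have lnN: "ln (real N) \<ge> 1/2"
  proof -
    have "ln (real N) \<ge> 1 - 1 / real N" using N by (intro ln_ge_1_minus_inv) simp
    moreover have "1 / real N \<le> 1/2" using N by (simp add: field_simps)
    ultimately show ?thesis by simp
  qed
  have leps: "ln \<epsilon> < 0" using eps by simp
  have Ldef: "L = ln (real N) - ln \<epsilon>" unfolding L_def using N eps by (simp add: ln_div)
  have L12: "L \<ge> 1/2" using lnN leps Ldef by simp
  have nL: "real n \<ge> 4000 * real N * L"
  proof -
    have "real_of_int \<lceil>1000 * real N * ln (real N / \<epsilon>)\<rceil> \<ge> 1000 * real N * ln (real N / \<epsilon>)"
      by (rule le_of_int_ceiling)
    then show ?thesis using nbig unfolding L_def by linarith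
  qed
  have NL: "real N * L \<ge> 1"
  proof -
    have "real N * L \<ge> 2 * (1/2)" using N L12 by (intro mult_mono) auto
    then show ?thesis by simp
  qed
  have npos: "real n > 0" using nL NL by simp
  have e2: "\<epsilon>^2 > 0" using eps by simp
  have lhs: "ln ((\<epsilon>^2)^N * (3/2)^g) = real N * (2 * ln \<epsilon>) + real g * ln (3/2)"
    using eps by (simp add: ln_mult ln_realpow)
  have rpos: "\<epsilon>^2 + real (n - 1) * 4 > 0" using e2 by (intro add_pos_nonneg) auto
  have rhs: "ln ((\<epsilon>^2 + real (n - 1) * 4)^N) = real N * ln (\<epsilon>^2 + real (n - 1) * 4)"
    using rpos by (simp add: ln_realpow)
  have "ln ((\<epsilon>^2)^N * (3/2)^g) \<le> ln ((\<epsilon>^2 + real (n - 1) * 4)^N)"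
    using pot e2 rpos by (subst ln_le_cancel_iff) auto
  then have A: "real g * ln (3/2) \<le> real N * (ln (\<epsilon>^2 + real (n - 1) * 4) - 2 * ln \<epsilon>)"
    unfolding lhs rhs by (simp add: algebra_simps)
  have "\<epsilon>^2 + real (n - 1) * 4 \<le> 5 * real n"
  proof -
    have "\<epsilon>^2 \<le> 1" using eps by (simp add: power_le_one)
    moreover have "real (n - 1) \<le> real n" by simp
    ultimately show ?thesis using npos by linarith
  qed
  then have "ln (\<epsilon>^2 + real (n - 1) * 4) \<le> ln (5 * real n)" using rpos by simp
  also have "\<dots> = ln 5 + ln (real n)" using npos by (simp add: ln_mult)
  finally have B: "ln (\<epsilon>^2 + real (n - 1) * 4) \<le> ln 5 + ln (real n)" .
  have ln5: "ln (5::real) \<le> 4" using ln_le_minus_one[of 5] by simp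
  define m where "m = real n / real N"
  have mpos: "m > 0" unfolding m_def using npos N by simp
  have nm: "real n = real N * m" unfolding m_def using N by simp
  have lnn: "ln (real n) = ln (real N) + ln m" unfolding nm using N mpos by (simp add: ln_mult)
  have lnm: "ln m \<le> m / 40 + 39"
  proof -
    have "ln (m / 40) \<le> m / 40 - 1" using mpos ln_le_minus_one[of "m/40"] by simp
    moreover have "ln (m / 40) = ln m - ln 40" using mpos by (simp add: ln_div)
    moreover have "ln (40::real) \<le> 39" using ln_le_minus_one[of 40] by simp
    ultimately show ?thesis by simp
  qed
  have ln32: "ln (3/2::real) \<ge> 1/3" using ln_ge_1_minus_inv[of "3/2"] by simp
  have C: "real g * ln (3/2) \<le> real N * (4 + 3 * L + m / 40 + 39)"
  proof -
    have "ln (\<epsilon>^2 + real (n - 1) * 4) - 2 * ln \<epsilon> \<le> 4 + 3 * L + m / 40 + 39"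
      using B ln5 lnn lnm Ldef leps lnN by linarith
    then have "real N * (ln (\<epsilon>^2 + real (n - 1) * 4) - 2 * ln \<epsilon>) \<le> real N * (4 + 3 * L + m / 40 + 39)"
      by (intro mult_left_mono) auto
    then show ?thesis using A by linarith
  qed
  have "real g * (1/3) \<le> real g * ln (3/2)" using ln32 by (intro mult_left_mono) auto
  then have "real g / 3 \<le> real g * ln (3/2)" by simp
  then have D: "real g \<le> 3 * (real N * (43 + 3 * L)) + 3 * real n / 40"
    using C nm by (simp add: algebra_simps)
  have E: "3 * (real N * (43 + 3 * L)) \<le> 268 * (real N * L)"
  proof -
    have "43 \<le> 86 * L" using L12 by simp
    then have "real N * 43 \<le> real N * (86 * L)" by (intro mult_left_mono) auto
    then show ?thesis by (simp add: algebra_simps)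
  qed
  show ?thesis using D E nL NL by simp
qed

lemma main_thm:
  fixes d :: nat and \<epsilon> :: real and u :: "nat \<Rightarrow> real" and S :: "(nat \<Rightarrow> real) set"
  assumes eps: "0 < \<epsilon>" "\<epsilon> < 1" and fin: "finite S"
    and SR: "\<forall>x\<in>S. in_Rd d x \<and> vnorm d x \<le> 1" and inj: "inj_on (\<lambda>x. ip d u x) S"
    and N1: "intrinsic_dim d S \<ge> 1"
    and big: "real (card S) \<ge> 4 * real_of_int \<lceil>1000 * real (intrinsic_dim d S) * ln (real (intrinsic_dim d S) / \<epsilon>)\<rceil>"
  shows "real (card {x\<in>S. derives d u \<epsilon> (S - {x}) x}) \<ge> 3/4 * real (card S)"
proof -
  define N where "N = intrinsic_dim d S"
  have N1': "N \<ge> 1" using N1 unfolding N_def .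
  obtain b where on: "orthonormal d N b" and span: "\<forall>x\<in>S. inspan N b x"
    using intrinsic_dim_basis[of S d] SR unfolding N_def by blast
  obtain L where Lset: "set L = S" and Lsort: "sorted_wrt (\<lambda>a b. ip d u b < ip d u a) L" and Ldist: "distinct L"
    using exists_sorted[OF fin, of "ip d u"] inj by auto
  define n where "n = card S"
  have lenL: "length L = n" unfolding n_def using Lset Ldist distinct_card by fastforce
  have norms: "\<forall>x\<in>S. ip d x x \<le> 1"
    using SR unfolding vnorm_def by (simp add: real_sqrt_le_1_iff)
  have n4: "real n \<ge> 4"
  proof -
    have "real N / \<epsilon> > 1" using N1' eps by (simp add: field_simps)
    then have "ln (real N / \<epsilon>) > 0" by simp
    then have pos: "1000 * real N * ln (real N / \<epsilon>) > 0" using N1' by simp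
    have "real_of_int \<lceil>1000 * real N * ln (real N / \<epsilon>)\<rceil> \<ge> 1000 * real N * ln (real N / \<epsilon>)"
      by (rule le_of_int_ceiling)
    with pos have "\<lceil>1000 * real N * ln (real N / \<epsilon>)\<rceil> \<ge> 1" by linarith
    then show ?thesis using big unfolding n_def N_def by linarith
  qed
  define Bad where "Bad = {x\<in>S. \<not> derives d u \<epsilon> (S - {x}) x}"
  have BadS: "Bad \<subseteq> S" unfolding Bad_def by auto
  have finB: "finite Bad" using BadS fin by (rule finite_subset)
  have good: "{x\<in>S. derives d u \<epsilon> (S - {x}) x} = S - Bad" unfolding Bad_def by auto
  have cardG: "real (card {x\<in>S. derives d u \<epsilon> (S - {x}) x}) = real n - real (card Bad)"
    unfolding good n_def using card_Diff_subset[OF finB BadS] card_mono[OF fin BadS] by simp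
  have nth_of: "\<exists>k<n. x = L ! k" if "x \<in> S" for x
    using that Lset lenL by (metis in_set_conv_nth)
  have badB: "real (card Bad) \<le> real n / 4"
  proof (cases "N = 1")
    case True
    have "Bad \<subseteq> {L ! 0}"
    proof
      fix x assume xB: "x \<in> Bad"
      then have xS: "x \<in> S" using BadS by blast
      obtain k where k: "k < n" "x = L ! k" using nth_of[OF xS] by blast
      have "k = 0"
      proof (rule ccontr)
        assume "k \<noteq> 0"
        then have "derives d u \<epsilon> (S - {L ! k}) (L ! k)"
          using good_1d[of d b S L u k \<epsilon>] on span Lset Lsort Ldist k n4 lenL eps True by simp
        then show False using xB k unfolding Bad_def by simp
      qed
      then show "x \<in> {L ! 0}" using k by simp
    qed
    then have "card Bad \<le> 1" using card_mono[of "{L ! 0}" Bad] by simp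
    then show ?thesis using n4 by simp
  next
    case False
    then have N2: "N \<ge> 2" using N1' by simp
    define v where "v = (\<lambda>j a. ip d (\<lambda>i. (L ! Suc j) i - (L ! j) i) (b a))"
    define G where "G i \<longleftrightarrow> (\<exists>x. 0 < (\<Sum>a<N. x a * v i a)^2 \<and> qf N (Wm (\<epsilon>^2) v i) x \<le> 2 * (\<Sum>a<N. x a * v i a)^2)" for i
    have sub: "Bad \<subseteq> insert (L ! 0) ((\<lambda>i. L ! Suc i) ` {i. i < n - 1 \<and> G i})"
    proof
      fix x assume xB: "x \<in> Bad"
      then have xS: "x \<in> S" using BadS by blast
      obtain k where k: "k < n" "x = L ! k" using nth_of[OF xS] by blast
      show "x \<in> insert (L ! 0) ((\<lambda>i. L ! Suc i) ` {i. i < n - 1 \<and> G i})"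
      proof (cases "k = 0")
        case True then show ?thesis using k by simp
      next
        case False
        have nd: "\<not> derives d u \<epsilon> (S - {L ! k}) (L ! k)" using xB k unfolding Bad_def by simp
        have "G (k - 1)"
          using bad_step[of d N b S L u k \<epsilon>] on span norms Lset Lsort Ldist k lenL False nd eps
          unfolding G_def v_def by simp
        moreover have "k - 1 < n - 1" using k False by simp
        moreover have "x = L ! Suc (k - 1)" using k False by simp
        ultimately show ?thesis by blast
      qed
    qed
    define g where "g = card {i. i < n - 1 \<and> G i}"
    have "card Bad \<le> card (insert (L ! 0) ((\<lambda>i. L ! Suc i) ` {i. i < n - 1 \<and> G i}))"
      using sub by (intro card_mono) auto
    also have "\<dots> \<le> Suc (card ((\<lambda>i. L ! Suc i) ` {i. i < n - 1 \<and> G i}))" by (simp add: card_insert_if)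
    also have "\<dots> \<le> Suc g" unfolding g_def by (simp add: card_image_le)
    finally have cB: "card Bad \<le> Suc g" .
    have e2: "\<epsilon>^2 > 0" using eps by simp
    have vb: "(v j a)^2 \<le> 4" if "j < n - 1" "a < N" for j a
    proof -
      have "(v j a)^2 \<le> (\<Sum>a<N. (v j a)^2)" using that by (intro member_le_sum) auto
      also have "\<dots> \<le> ip d (\<lambda>i. (L ! Suc j) i - (L ! j) i) (\<lambda>i. (L ! Suc j) i - (L ! j) i)"
        unfolding v_def by (rule bessel[OF on])
      also have "\<dots> \<le> 2 * ip d (L ! Suc j) (L ! Suc j) + 2 * ip d (L ! j) (L ! j)" by (rule ip_diff_le)
      also have "\<dots> \<le> 4"
      proof -
        have "L ! Suc j \<in> S" "L ! j \<in> S" using that lenL Lset by auto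
        then have "ip d (L ! Suc j) (L ! Suc j) \<le> 1" "ip d (L ! j) (L ! j) \<le> 1" using norms by auto
        then show ?thesis by linarith
      qed
      finally show ?thesis .
    qed
    have pot: "(\<epsilon>^2)^N * (3/2)^g \<le> (\<epsilon>^2 + real (n - 1) * 4)^N"
    proof -
      have "(\<epsilon>^2)^N * (3/2)^g \<le> D N (Wm (\<epsilon>^2) v (n - 1))"
        using potential_lower[OF e2, of N "n - 1" v] unfolding g_def G_def by simp
      also have "\<dots> \<le> (\<epsilon>^2 + real (n - 1) * 4)^N"
        by (rule potential_upper[OF e2]) (rule vb)
      finally show ?thesis .
    qed
    have "1 + real g \<le> real n / 4"
      by (rule arith_final[OF N2 eps pot]) (use big in \<open>simp add: n_def N_def\<close>)
    then show ?thesis using cB by simp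
  qed
  show ?thesis using cardG badB unfolding n_def by simp
qed

theorem lemmaA2:
  shows "\<exists>C>0. \<forall>(d::nat) (\<epsilon>::real) (u::nat \<Rightarrow> real) (S::(nat \<Rightarrow> real) set).
     0 < \<epsilon> \<and> \<epsilon> < 1 \<and> in_Rd d u \<and> finite S \<and>
     (\<forall>x\<in>S. in_Rd d x \<and> vnorm d x \<le> 1) \<and>
     inj_on (\<lambda>x. ip d u x) S \<and>
     intrinsic_dim d S \<ge> 1 \<and>
     real (card S) \<ge> 4 * real_of_int \<lceil>C * real (intrinsic_dim d S) * ln (real (intrinsic_dim d S) / \<epsilon>)\<rceil>
     \<longrightarrow> real (card {x\<in>S. derives d u \<epsilon> (S - {x}) x}) \<ge> 3/4 * real (card S)"
proof (intro exI[of _ "1000"] conjI allI impI)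
  show "(0::real) < 1000" by simp
next
  fix d :: nat and \<epsilon> :: real and u :: "nat \<Rightarrow> real" and S :: "(nat \<Rightarrow> real) set"
  assume H: "0 < \<epsilon> \<and> \<epsilon> < 1 \<and> in_Rd d u \<and> finite S \<and>
     (\<forall>x\<in>S. in_Rd d x \<and> vnorm d x \<le> 1) \<and>
     inj_on (\<lambda>x. ip d u x) S \<and>
     intrinsic_dim d S \<ge> 1 \<and>
     real (card S) \<ge> 4 * real_of_int \<lceil>1000 * real (intrinsic_dim d S) * ln (real (intrinsic_dim d S) / \<epsilon>)\<rceil>"
  then show "real (card {x\<in>S. derives d u \<epsilon> (S - {x}) x}) \<ge> 3/4 * real (card S)"
    using main_thm[of \<epsilon> S d u] by blast
qed

end
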